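(* Fix $a\in\mathbb{R}$. For delays $T>0$ with $aT<1$, let $k_u(T)$ denote the unique solution $k>|a|$ of $$T\sqrt{k^2-a^2}=\arccos\!\left(\frac{a}{k}\right).$$ Then $T\mapsto k_u(T)$ is decreasing and convex. Moreover, if $a>0$ then $$\lim_{T\to 1/a}k_u(T)=a,\qquad \lim_{T\to0^+}k_u(T)=+\infty,$$ and if $a<0$ then $$\lim_{T\to+\infty}k_u(T)=|a|,\qquad \lim_{T\to0^+}k_u(T)=+\infty .$$
   Context: Consider the scalar retarded system $\dot x(t)=a x(t)-k x(t-T)$ with $a,k\in\mathbb{R}$ and constant delay $T>0$. For $aT<1$, the set of gains $k$ for which this system is exponentially stable is exactly the open interval $(a,k_u)$, where $k_u$ is defined as in the claim. *)

theory Defs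
  imports "HOL-Analysis.Analysis"
begin

definition delay_dom :: "real \<Rightarrow> real set" where
  "delay_dom a = {T. 0 < T \<and> a * T < 1}"

definition ku :: "real \<Rightarrow> real \<Rightarrow> real" where
  "ku a T = (THE k. \<bar>a\<bar> < k \<and> T * sqrt (k^2 - a^2) = arccos (a / k))"

end

theory Submission imports Defs begin

lemma deriv_G:
  fixes a k w s :: real
  assumes k: "\<bar>a\<bar> < k" and w: "w = sqrt (k^2 - a^2)" and c: "cos s \<noteq> 0"
  shows "((\<lambda>s. arctan ((k * tan s + a) / w) / w) has_real_derivative (1 / (k + a * sin (2 * s)))) (at s)"
proof -
  have ka: "a^2 < k^2"
  proof -
    have "\<bar>a\<bar>^2 < k^2" using k by (intro power_strict_mono) auto
    thus ?thesis by simp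
  qed 
  hence w0: "w > 0" using w by simp
  have ww: "w^2 = k^2 - a^2" using w ka by simp
  have "((\<lambda>s. arctan ((k * tan s + a) / w) / w) has_real_derivative
     (inverse (1 + ((k * tan s + a) / w)^2) * (k * inverse ((cos s)\<^sup>2) / w)) / w) (at s)"
    using w0 by (auto intro!: derivative_eq_intros c)
  moreover have "(inverse (1 + ((k * tan s + a) / w)^2) * (k * inverse ((cos s)\<^sup>2) / w)) / w
      = 1 / (k + a * sin (2 * s))"
  proof -
    have k0: "k > 0" using k by linarith
    have pos: "k + a * sin (2 * s) > 0"
    proof -
      have "\<bar>a * sin (2 * s)\<bar> \<le> \<bar>a\<bar>" by (simp add: abs_mult mult_left_le)
      thus ?thesis using k by linarith
    qed
    have sc: "(sin s)^2 + (cos s)^2 = 1" by simp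
    have "w^2 * (cos s)^2 + (k * sin s + a * cos s)^2 = k * (k + a * sin (2 * s))"
      using ww sc unfolding sin_double by algebra
    moreover have "1 + ((k * tan s + a) / w)^2 = (w^2 * (cos s)^2 + (k * sin s + a * cos s)^2) / (w^2 * (cos s)^2)"
      using c w0 by (simp add: tan_def field_simps power2_eq_square)
    ultimately have e: "1 + ((k * tan s + a) / w)^2 = k * (k + a * sin (2 * s)) / (w^2 * (cos s)^2)" by simp
    have "k * w * (k + a * sin (2 * s)) > 0" using w0 k0 pos by simp
    hence nz: "k * (k * w) + a * (k * (w * sin (s * 2))) \<noteq> 0" by (simp add: algebra_simps mult.commute)
    show ?thesis unfolding e using c w0 k0 pos nz
      by (simp add: field_simps power2_eq_square)
  qed
  ultimately show ?thesis by simp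
qed

lemma arccos_arctan:
  fixes a k w :: real
  assumes k: "\<bar>a\<bar> < k" and w: "w = sqrt (k^2 - a^2)"
  shows "arccos (a / k) = 2 * (arctan ((k + a) / w) - arctan (a / w))"
proof -
  have k0: "k > 0" using k by linarith
  have ka: "a^2 < k^2"
  proof -
    have "\<bar>a\<bar>^2 < k^2" using k by (intro power_strict_mono) auto
    thus ?thesis by simp
  qed
  hence w0: "w > 0" using w by simp
  have x1: "-1 < a / k" "a / k < 1" using k k0 by (auto simp: field_simps abs_less_iff)
  define \<theta> where "\<theta> = arccos (a / k)"
  have th: "0 < \<theta>" "\<theta> < pi" using arccos_lt_bounded[OF x1] \<theta>_def by auto
  have cth: "cos \<theta> = a / k" using x1 \<theta>_def by simp
  have "sin \<theta> = sqrt (1 - (a/k)^2)" using x1 \<theta>_def by (simp add: sin_arccos)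
  also have "\<dots> = sqrt ((w / k)^2)" using w k0 ka by (simp add: field_simps power2_eq_square)
  also have "\<dots> = w / k" using w0 k0 by simp
  finally have sth: "sin \<theta> = w / k" .
  define \<phi> where "\<phi> = \<theta> / 2"
  have ph: "0 < \<phi>" "\<phi> < pi / 2" using th \<phi>_def by auto
  have sp: "sin \<phi> > 0" using ph by (simp add: sin_gt_zero)
  have cp: "cos \<phi> > 0" using ph by (simp add: cos_gt_zero_pi)
  have t2: "\<theta> = 2 * \<phi>" using \<phi>_def by simp
  have "(k + a) / w = (1 + cos \<theta>) / sin \<theta>" unfolding cth sth using k0 w0 by (simp add: field_simps)
  also have "\<dots> = cos \<phi> / sin \<phi>" unfolding t2 cos_double_cos sin_double using sp cp
    by (simp add: field_simps power2_eq_square)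
  also have "\<dots> = tan (pi/2 - \<phi>)" by (simp add: tan_cot' cot_def)
  finally have e1: "arctan ((k + a) / w) = pi/2 - \<phi>" using ph by (simp add: arctan_tan)
  have "a / w = cos \<theta> / sin \<theta>" unfolding cth sth using k0 w0 by (simp add: field_simps)
  also have "\<dots> = tan (pi/2 - \<theta>)" by (simp add: tan_cot' cot_def)
  finally have e2: "arctan (a / w) = pi/2 - \<theta>" using th by (simp add: arctan_tan)
  show ?thesis using e1 e2 \<theta>_def t2 by simp
qed

lemma int_rep:
  fixes a k :: real
  assumes k: "\<bar>a\<bar> < k"
  shows "((\<lambda>s. 1 / (k + a * sin (2 * s))) has_integral arccos (a / k) / (2 * sqrt (k^2 - a^2))) {0..pi/4}"
proof -
  define w where "w = sqrt (k^2 - a^2)"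
  have "\<bar>a\<bar>^2 < k^2" using k by (intro power_strict_mono) auto
  hence wpos: "w > 0" unfolding w_def by simp
  have "((\<lambda>s. 1 / (k + a * sin (2 * s))) has_integral
     (arctan ((k * tan (pi/4) + a) / w) / w - arctan ((k * tan 0 + a) / w) / w)) {0..pi/4}"
  proof (rule fundamental_theorem_of_calculus)
    show "0 \<le> pi/4" by simp
    fix s assume s: "s \<in> {0..pi/4}"
    have "cos s > 0" using s pi_gt_zero by (intro cos_gt_zero_pi; simp; linarith)
    hence "((\<lambda>s. arctan ((k * tan s + a) / w) / w) has_real_derivative (1 / (k + a * sin (2 * s)))) (at s)"
      by (intro deriv_G[OF k w_def]) auto
    thus "((\<lambda>s. arctan ((k * tan s + a) / w) / w) has_vector_derivative (1 / (k + a * sin (2 * s)))) (at s within {0..pi/4})"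
      by (simp add: has_real_derivative_iff_has_vector_derivative has_vector_derivative_at_within)
  qed
  moreover have "arctan ((k * tan (pi/4) + a) / w) / w - arctan ((k * tan 0 + a) / w) / w
     = arccos (a / k) / (2 * sqrt (k^2 - a^2))"
  proof -
    have "arccos (a/k) / (2 * sqrt (k^2 - a^2)) = 2 * (arctan ((k + a) / w) - arctan (a / w)) / (2 * w)"
      using arccos_arctan[OF k w_def] w_def by simp
    thus ?thesis using wpos by (simp add: tan_45 diff_divide_distrib add.commute)
  qed
  ultimately show ?thesis by simp
qed

definition hf :: "real \<Rightarrow> real \<Rightarrow> real" where
  "hf a k = arccos (a / k) / sqrt (k^2 - a^2)"

lemma sq_lt: "\<bar>a::real\<bar> < k \<Longrightarrow> a^2 < k^2"
proof -
  assume k: "\<bar>a\<bar> < k"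
  have "\<bar>a\<bar>^2 < k^2" using k by (intro power_strict_mono) auto
  thus ?thesis by simp
qed

lemma hf_int: "\<bar>a\<bar> < k \<Longrightarrow> ((\<lambda>s. 1 / (k + a * sin (2 * s))) has_integral hf a k / 2) {0..pi/4}"
proof -
  assume k: "\<bar>a\<bar> < k"
  have e: "hf a k / 2 = arccos (a / k) / (2 * sqrt (k^2 - a^2))" by (simp add: hf_def)
  show ?thesis unfolding e by (rule int_rep[OF k])
qed

lemma denom_ge: "\<bar>a * sin (2 * s)\<bar> \<le> \<bar>a::real\<bar>"
  by (simp add: abs_mult mult_left_le)

lemma hf_upper:
  assumes k: "\<bar>a\<bar> < k"
  shows "hf a k \<le> pi / (2 * (k - \<bar>a\<bar>))"
proof -
  have c: "((\<lambda>s. 1 / (k - \<bar>a\<bar>)) has_integral pi / 4 * (1 / (k - \<bar>a\<bar>))) {0..pi/4}"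
    using has_integral_const_real[of "1 / (k - \<bar>a\<bar>)" 0 "pi/4"] by simp
  have "hf a k / 2 \<le> pi / 4 * (1 / (k - \<bar>a\<bar>))"
  proof (rule has_integral_le[OF hf_int[OF k] c])
    fix s
    have "k - \<bar>a\<bar> \<le> k + a * sin (2 * s)" using denom_ge[of a s] by linarith
    moreover have "0 < k - \<bar>a\<bar>" using k by simp
    ultimately show "1 / (k + a * sin (2 * s)) \<le> 1 / (k - \<bar>a\<bar>)"
      by (intro divide_left_mono) auto
  qed
  thus ?thesis using k by (simp add: field_simps)
qed

lemma recip_diff:
  fixes x b k1 k2 :: real
  assumes "\<bar>x\<bar> \<le> b" "b < k1" "k1 < k2"
  shows "(k2 - k1) / ((k1 + b) * (k2 + b)) \<le> 1 / (k1 + x) - 1 / (k2 + x)"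
proof -
  have p1: "0 < k1 + x" "0 < k2 + x" using assms by auto
  have "1 / (k1 + x) - 1 / (k2 + x) = (k2 - k1) / ((k1 + x) * (k2 + x))"
    using p1 by (simp add: field_simps)
  moreover have "(k1 + x) * (k2 + x) \<le> (k1 + b) * (k2 + b)"
    using p1 assms by (intro mult_mono) auto
  moreover have "0 < (k1 + x) * (k2 + x)" using p1 by simp
  ultimately show ?thesis using assms by (simp add: frac_le)
qed

lemma hf_strict_dec:
  assumes k1: "\<bar>a\<bar> < k1" and k12: "k1 < k2"
  shows "hf a k2 < hf a k1"
proof -
  define c where "c = (k2 - k1) / ((k1 + \<bar>a\<bar>) * (k2 + \<bar>a\<bar>))"
  have c0: "c > 0" using k1 k12 unfolding c_def by (intro divide_pos_pos mult_pos_pos) auto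
  have k2: "\<bar>a\<bar> < k2" using k1 k12 by simp
  have cc: "((\<lambda>s. c) has_integral pi / 4 * c) {0..pi/4}"
    using has_integral_const_real[of c 0 "pi/4"] by simp
  have d: "((\<lambda>s. 1 / (k1 + a * sin (2 * s)) - 1 / (k2 + a * sin (2 * s))) has_integral hf a k1 / 2 - hf a k2 / 2) {0..pi/4}"
    by (intro has_integral_diff hf_int k1 k2)
  have "pi / 4 * c \<le> hf a k1 / 2 - hf a k2 / 2"
  proof (rule has_integral_le[OF cc d])
    fix s show "c \<le> 1 / (k1 + a * sin (2 * s)) - 1 / (k2 + a * sin (2 * s))"
      unfolding c_def by (rule recip_diff[OF denom_ge k1 k12])
  qed
  moreover have "pi / 4 * c > 0" using c0 by simp
  ultimately show ?thesis by simp
qed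

lemma hf_mono: "\<bar>a\<bar> < k1 \<Longrightarrow> k1 \<le> k2 \<Longrightarrow> hf a k2 \<le> hf a k1"
  using hf_strict_dec[of a k1 k2] by (cases "k1 = k2") auto

lemma recip_conv:
  fixes d1 d2 u v :: real
  assumes "0 < d1" "0 < d2" "0 \<le> u" "0 \<le> v" "u + v = 1"
  shows "1 / (u * d1 + v * d2) \<le> u / d1 + v / d2"
proof -
  have "convex_on {0<..} (inverse :: real \<Rightarrow> real)" by (rule convex_on_inverse) auto
  hence "inverse (u *\<^sub>R d1 + v *\<^sub>R d2) \<le> u * inverse d1 + v * inverse d2"
    using assms unfolding convex_on_def by auto
  thus ?thesis by (simp add: divide_inverse)
qed

lemma hf_conv:
  assumes k1: "\<bar>a\<bar> < k1" and k2: "\<bar>a\<bar> < k2" and uv: "0 \<le> u" "0 \<le> v" "u + v = 1"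
  shows "hf a (u * k1 + v * k2) \<le> u * hf a k1 + v * hf a k2"
proof -
  have km: "\<bar>a\<bar> < u * k1 + v * k2"
  proof -
    have "u * \<bar>a\<bar> \<le> u * k1" "v * \<bar>a\<bar> \<le> v * k2" using uv k1 k2 by (auto intro: mult_left_mono)
    moreover have "u * \<bar>a\<bar> + v * \<bar>a\<bar> = \<bar>a\<bar>" using uv by (simp add: algebra_simps flip: distrib_right)
    ultimately have "\<bar>a\<bar> \<le> u * k1 + v * k2" by linarith
    moreover have "u * \<bar>a\<bar> < u * k1 \<or> v * \<bar>a\<bar> < v * k2" using uv k1 k2 by (cases "u = 0") auto
    ultimately show ?thesis using \<open>u * \<bar>a\<bar> \<le> u * k1\<close> \<open>v * \<bar>a\<bar> \<le> v * k2\<close> \<open>u * \<bar>a\<bar> + v * \<bar>a\<bar> = \<bar>a\<bar>\<close> by linarith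
  qed
  have r: "((\<lambda>s. u * (1 / (k1 + a * sin (2 * s))) + v * (1 / (k2 + a * sin (2 * s)))) has_integral
     u * (hf a k1 / 2) + v * (hf a k2 / 2)) {0..pi/4}"
    by (intro has_integral_add has_integral_mult_right hf_int k1 k2)
  have "hf a (u * k1 + v * k2) / 2 \<le> u * (hf a k1 / 2) + v * (hf a k2 / 2)"
  proof (rule has_integral_le[OF hf_int[OF km] r])
    fix s
    have p: "0 < k1 + a * sin (2 * s)" "0 < k2 + a * sin (2 * s)" using denom_ge[of a s] k1 k2 by linarith+
    have vv: "v = 1 - u" using uv by simp
    have "u * k1 + v * k2 + a * sin (2 * s) = u * (k1 + a * sin (2 * s)) + v * (k2 + a * sin (2 * s))"
      unfolding vv by (simp add: algebra_simps)
    thus "1 / (u * k1 + v * k2 + a * sin (2 * s)) \<le> u * (1 / (k1 + a * sin (2 * s))) + v * (1 / (k2 + a * sin (2 * s)))"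
      using recip_conv[OF p uv] by simp
  qed
  thus ?thesis by simp
qed

lemma hf_ge_inv:
  assumes k: "\<bar>a\<bar> < k"
  shows "1 / k \<le> hf a k"
proof -
  have k0: "k > 0" using k by linarith
  have w0: "sqrt (k^2 - a^2) > 0" using sq_lt[OF k] by simp
  have x1: "-1 \<le> a / k" "a / k \<le> 1" using k k0 by (auto simp: field_simps abs_le_iff)
  have "sqrt (1 - (a/k)^2) = sqrt ((sqrt (k^2 - a^2) / k)^2)" using k0 sq_lt[OF k] by (simp add: field_simps power2_eq_square)
  also have "\<dots> = sqrt (k^2 - a^2) / k" using w0 k0 by simp
  finally have "sin (arccos (a / k)) = sqrt (k^2 - a^2) / k" using x1 by (simp add: sin_arccos)
  moreover have "sin (arccos (a / k)) \<le> arccos (a / k)" by (rule sin_x_le_x) (use x1 arccos_lbound in auto)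
  ultimately have "sqrt (k^2 - a^2) / k \<le> arccos (a / k)" by simp
  thus ?thesis using w0 k0 unfolding hf_def by (simp add: field_simps)
qed

lemma hf_ge_neg:
  assumes k: "\<bar>a\<bar> < k" and a: "a \<le> 0"
  shows "pi / 2 / sqrt (k^2 - a^2) \<le> hf a k"
proof -
  have k0: "k > 0" using k by linarith
  have w0: "sqrt (k^2 - a^2) > 0" using sq_lt[OF k] by simp
  have "arccos 0 \<le> arccos (a / k)" using k k0 a by (intro arccos_le_arccos) (auto simp: field_simps abs_le_iff divide_nonpos_pos)
  hence "pi / 2 \<le> arccos (a / k)" by simp
  thus ?thesis using w0 unfolding hf_def by (intro divide_right_mono) auto
qed

lemma sin_gt_xcos:
  fixes t :: real
  assumes "0 < t" "t < pi / 2"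
  shows "t * cos t < sin t"
proof -
  have "\<exists>z. 0 < z \<and> z < t \<and> ((sin t - t * cos t) - (sin 0 - 0 * cos 0) = (t - 0) * (z * sin z))"
    by (rule MVT2[OF assms(1)]) (auto intro!: derivative_eq_intros simp: algebra_simps)
  then obtain z where z: "0 < z" "z < t" "sin t - t * cos t = t * (z * sin z)" by auto
  have "sin z > 0" using z assms by (intro sin_gt_zero) auto
  hence "t * (z * sin z) > 0" using z assms by simp
  thus ?thesis using z by simp
qed

lemma hf_lt:
  assumes a: "0 < a" and k: "a < k"
  shows "hf a k < 1 / a"
proof -
  have k0: "k > 0" using a k by linarith
  have ka: "\<bar>a\<bar> < k" using a k by simp
  have w0: "sqrt (k^2 - a^2) > 0" using sq_lt[OF ka] by simp
  define t where "t = arccos (a / k)"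
  have x1: "0 < a / k" "a / k < 1" using a k k0 by (auto simp: field_simps)
  have t0: "0 < t" using arccos_lt_bounded[of "a/k"] x1 t_def by auto
  have "arccos (a / k) < arccos 0" using x1 by (intro arccos_less_arccos) auto
  hence t1: "t < pi / 2" using t_def by simp
  have ct: "cos t = a / k" using x1 t_def by simp
  have "sqrt (1 - (a/k)^2) = sqrt ((sqrt (k^2 - a^2) / k)^2)" using k0 sq_lt[OF ka] by (simp add: field_simps power2_eq_square)
  also have "\<dots> = sqrt (k^2 - a^2) / k" using w0 k0 by simp
  finally have st: "sin t = sqrt (k^2 - a^2) / k" using x1 t_def by (simp add: sin_arccos)
  have "t * (a / k) < sqrt (k^2 - a^2) / k" using sin_gt_xcos[OF t0 t1] ct st by simp
  hence "t * a < sqrt (k^2 - a^2)" using k0 by (simp add: field_simps)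
  thus ?thesis using w0 a unfolding hf_def t_def[symmetric] by (simp add: field_simps)
qed

lemma hf_cont:
  assumes k: "\<bar>a\<bar> < k"
  shows "isCont (hf a) k"
proof -
  have k0: "k > 0" using k by linarith
  have w0: "sqrt (k^2 - a^2) > 0" using sq_lt[OF k] by simp
  have x1: "-1 < a / k" "a / k < 1" using k k0 by (auto simp: field_simps abs_less_iff)
  have c1: "isCont (\<lambda>k. a / k) k" using k0 by (auto intro!: continuous_intros)
  have "isCont (\<lambda>k. arccos (a / k)) k"
    using isCont_o2[OF c1, of arccos] isCont_arccos[OF x1] by simp
  moreover have "isCont (\<lambda>k. sqrt (k^2 - a^2)) k" by (auto intro!: continuous_intros)
  ultimately have "isCont (\<lambda>k. arccos (a / k) / sqrt (k^2 - a^2)) k" using w0 by (intro isCont_divide) auto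
  thus ?thesis unfolding hf_def[abs_def] .
qed

lemma eq_iff:
  assumes k: "\<bar>a\<bar> < k"
  shows "(T * sqrt (k^2 - a^2) = arccos (a / k)) \<longleftrightarrow> T = hf a k"
proof -
  have w0: "sqrt (k^2 - a^2) > 0" using sq_lt[OF k] by simp
  thus ?thesis unfolding hf_def by (auto simp: field_simps)
qed


lemma exists_k:
  assumes T: "T \<in> delay_dom a"
  shows "\<exists>k. \<bar>a\<bar> < k \<and> hf a k = T"
proof -
  have T0: "T > 0" and aT: "a * T < 1" using T by (auto simp: delay_dom_def)
  define k2 where "k2 = \<bar>a\<bar> + pi / (2 * T)"
  have k2a: "\<bar>a\<bar> < k2" using T0 unfolding k2_def by simp
  have "hf a k2 \<le> pi / (2 * (k2 - \<bar>a\<bar>))" by (rule hf_upper[OF k2a])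
  also have "\<dots> = T" using T0 unfolding k2_def by simp
  finally have h2: "hf a k2 \<le> T" .
  have "\<exists>k1'. \<bar>a\<bar> < k1' \<and> T \<le> hf a k1'"
  proof (cases "a > 0")
    case True
    define k where "k = (a + 1 / T) / 2"
    have "a < 1 / T" using aT T0 by (simp add: field_simps)
    hence kk: "a < k" "k < 1 / T" unfolding k_def by auto
    have ka: "\<bar>a\<bar> < k" using kk True by simp
    have "T < 1 / k" using kk T0 True by (simp add: field_simps)
    also have "\<dots> \<le> hf a k" by (rule hf_ge_inv[OF ka])
    finally show ?thesis using ka by (intro exI[of _ k]) auto
  next
    case False
    define k where "k = sqrt (a^2 + (1 / T)^2)"
    have "sqrt (a^2) < k" unfolding k_def using T0 by (intro real_sqrt_less_mono) simp
    hence ka: "\<bar>a\<bar> < k" by simp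
    have "k^2 - a^2 = (1 / T)^2" unfolding k_def by simp
    hence w: "sqrt (k^2 - a^2) = 1 / T" using T0 by simp
    have "T \<le> pi / 2 * T" using T0 pi_ge_two by (simp add: mult_right_mono)
    also have "\<dots> = pi / 2 / sqrt (k^2 - a^2)" unfolding w by simp
    also have "\<dots> \<le> hf a k" using hf_ge_neg[OF ka] False by simp
    finally show ?thesis using ka by (intro exI[of _ k]) auto
  qed
  then obtain k1' where k1': "\<bar>a\<bar> < k1'" "T \<le> hf a k1'" by auto
  define k1 where "k1 = min k1' k2"
  have k1a: "\<bar>a\<bar> < k1" unfolding k1_def using k1' k2a by simp
  have h1: "T \<le> hf a k1"
  proof (cases "k1' \<le> k2")
    case True thus ?thesis using k1' unfolding k1_def by simp
  next
    case False
    hence "hf a k1' \<le> hf a k2" using hf_mono[OF k2a] by simp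
    thus ?thesis using k1' False unfolding k1_def by simp
  qed
  have "\<exists>x. k1 \<le> x \<and> x \<le> k2 \<and> hf a x = T"
    by (rule IVT2[of "hf a", OF h2 h1]) (use k1a in \<open>auto simp: k1_def intro!: hf_cont\<close>)
  then obtain x where "k1 \<le> x" "hf a x = T" by auto
  thus ?thesis using k1a by (intro exI[of _ x]) auto
qed

lemma uniq_k: "\<bar>a\<bar> < k1 \<Longrightarrow> \<bar>a\<bar> < k2 \<Longrightarrow> hf a k1 = hf a k2 \<Longrightarrow> k1 = k2"
  using hf_strict_dec[of a k1 k2] hf_strict_dec[of a k2 k1] by (cases "k1 < k2"; cases "k2 < k1") auto

lemma ex1_k:
  assumes T: "T \<in> delay_dom a"
  shows "\<exists>!k. \<bar>a\<bar> < k \<and> T * sqrt (k^2 - a^2) = arccos (a / k)"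
proof -
  obtain k where k: "\<bar>a\<bar> < k" "hf a k = T" using exists_k[OF T] by auto
  show ?thesis
  proof (rule ex1I[of _ k])
    show "\<bar>a\<bar> < k \<and> T * sqrt (k^2 - a^2) = arccos (a / k)" using k eq_iff[OF k(1)] by simp
    fix y assume "\<bar>a\<bar> < y \<and> T * sqrt (y^2 - a^2) = arccos (a / y)"
    hence "\<bar>a\<bar> < y" "hf a y = T" using eq_iff[of a y T] by auto
    thus "y = k" using uniq_k[of a y k] k by simp
  qed
qed

lemma ku_prop:
  assumes T: "T \<in> delay_dom a"
  shows "\<bar>a\<bar> < ku a T \<and> hf a (ku a T) = T"
proof -
  have "\<bar>a\<bar> < ku a T \<and> T * sqrt ((ku a T)^2 - a^2) = arccos (a / ku a T)"
    unfolding ku_def by (rule theI'[OF ex1_k[OF T]])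
  thus ?thesis using eq_iff[of a "ku a T" T] by auto
qed

lemma ku_gt: "T \<in> delay_dom a \<Longrightarrow> hf a k < T \<Longrightarrow> \<bar>a\<bar> < k \<Longrightarrow> ku a T < k"
  using ku_prop[of T a] hf_mono[of a k "ku a T"] by force

lemma ku_lt: "T \<in> delay_dom a \<Longrightarrow> T < hf a k \<Longrightarrow> \<bar>a\<bar> < k \<Longrightarrow> k < ku a T"
  using ku_prop[of T a] hf_mono[of a "ku a T" k] by force

lemma dom_convex: "convex (delay_dom a)"
proof (cases "a > 0")
  case True
  hence "delay_dom a = {0<..<1/a}" by (auto simp: delay_dom_def field_simps)
  thus ?thesis by (simp add: convex_real_interval)
next
  case False
  hence "delay_dom a = {0<..}" by (auto simp: delay_dom_def mult_nonpos_nonneg intro: le_less_trans[of _ 0])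
  thus ?thesis by (simp add: convex_real_interval)
qed

lemma ku_convex: "convex_on (delay_dom a) (ku a)"
  unfolding convex_on_def
proof (intro conjI dom_convex ballI allI impI)
  fix T1 T2 u v :: real
  assume T1: "T1 \<in> delay_dom a" and T2: "T2 \<in> delay_dom a" and uv: "0 \<le> u" "0 \<le> v" "u + v = 1"
  have T: "u *\<^sub>R T1 + v *\<^sub>R T2 \<in> delay_dom a"
    using dom_convex[of a] T1 T2 uv unfolding convex_def by blast
  hence T': "u * T1 + v * T2 \<in> delay_dom a" by simp
  note p1 = ku_prop[OF T1] and p2 = ku_prop[OF T2] and p = ku_prop[OF T']
  have km: "\<bar>a\<bar> < u * ku a T1 + v * ku a T2"
  proof -
    have "u * \<bar>a\<bar> \<le> u * ku a T1" "v * \<bar>a\<bar> \<le> v * ku a T2" using uv p1 p2 by (auto intro: mult_left_mono)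
    moreover have "u * \<bar>a\<bar> + v * \<bar>a\<bar> = \<bar>a\<bar>" using uv by (simp flip: distrib_right)
    moreover have "u * \<bar>a\<bar> < u * ku a T1 \<or> v * \<bar>a\<bar> < v * ku a T2" using uv p1 p2 by (cases "u = 0") auto
    ultimately show ?thesis by linarith
  qed
  have "hf a (u * ku a T1 + v * ku a T2) \<le> u * hf a (ku a T1) + v * hf a (ku a T2)"
    using hf_conv[of a "ku a T1" "ku a T2" u v] p1 p2 uv by simp
  also have "\<dots> = hf a (ku a (u * T1 + v * T2))" using p1 p2 p by simp
  finally have "hf a (u * ku a T1 + v * ku a T2) \<le> hf a (ku a (u * T1 + v * T2))" .
  hence "ku a (u * T1 + v * T2) \<le> u * ku a T1 + v * ku a T2"
    using hf_strict_dec[OF km, of "ku a (u * T1 + v * T2)"] by force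
  thus "ku a (u *\<^sub>R T1 + v *\<^sub>R T2) \<le> u * ku a T1 + v * ku a T2" by simp
qed

lemma ku_dec: "T1 \<in> delay_dom a \<Longrightarrow> T2 \<in> delay_dom a \<Longrightarrow> T1 < T2 \<Longrightarrow> ku a T2 < ku a T1"
  using ku_prop[of T1 a] ku_prop[of T2 a] hf_mono[of a "ku a T1" "ku a T2"] by force

lemma ku_at_right0: "filterlim (ku a) at_top (at_right 0)"
  unfolding filterlim_at_top
proof
  fix Z :: real
  define k0 where "k0 = max Z \<bar>a\<bar> + 1"
  have k0a: "\<bar>a\<bar> < k0" unfolding k0_def by simp
  have k0p: "k0 > 0" using k0a by linarith
  have b0: "hf a k0 > 0" using hf_ge_inv[OF k0a] k0p by (meson less_le_trans zero_less_divide_1_iff)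
  define b where "b = (if a > 0 then min (hf a k0) (1 / a) else hf a k0)"
  have "b > 0" using b0 unfolding b_def by auto
  hence ev: "eventually (\<lambda>T. T \<in> {0<..<b}) (at_right 0)" by (rule eventually_at_right_real)
  show "eventually (\<lambda>T. Z \<le> ku a T) (at_right 0)"
  proof (rule eventually_mono[OF ev])
    fix T assume T: "T \<in> {0<..<b}"
    have Td: "T \<in> delay_dom a"
    proof (cases "a > 0")
      case True
      hence "T < 1 / a" using T unfolding b_def by auto
      thus ?thesis using T True by (simp add: delay_dom_def field_simps)
    next
      case False
      hence "a * T \<le> 0" using T by (simp add: mult_nonpos_nonneg)
      thus ?thesis using T by (simp add: delay_dom_def)
    qed
    have "T < hf a k0" using T unfolding b_def by (auto split: if_splits)
    hence "k0 < ku a T" by (rule ku_lt[OF Td _ k0a])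
    thus "Z \<le> ku a T" unfolding k0_def by simp
  qed
qed

lemma ku_at_left: 
  assumes a: "a > 0"
  shows "(ku a \<longlongrightarrow> a) (at_left (1 / a))"
  unfolding tendsto_iff
proof (intro allI impI)
  fix e :: real assume e: "e > 0"
  define k0 where "k0 = a + e"
  have k0a: "\<bar>a\<bar> < k0" using a e unfolding k0_def by simp
  have hl: "hf a k0 < 1 / a" using hf_lt[OF a] a e unfolding k0_def by simp
  define b where "b = max (hf a k0) 0"
  have "b < 1 / a" using hl a unfolding b_def by simp
  hence ev: "eventually (\<lambda>T. T \<in> {b<..<1/a}) (at_left (1/a))" by (rule eventually_at_left_real)
  show "eventually (\<lambda>T. dist (ku a T) a < e) (at_left (1 / a))"
  proof (rule eventually_mono[OF ev])
    fix T assume T: "T \<in> {b<..<1/a}"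
    have Td: "T \<in> delay_dom a" using T a unfolding b_def by (auto simp: delay_dom_def field_simps)
    have "hf a k0 < T" using T unfolding b_def by simp
    hence "ku a T < k0" by (rule ku_gt[OF Td _ k0a])
    moreover have "a < ku a T" using ku_prop[OF Td] a by simp
    ultimately show "dist (ku a T) a < e" unfolding k0_def dist_real_def by simp
  qed
qed

lemma ku_at_top:
  assumes a: "a < 0"
  shows "(ku a \<longlongrightarrow> \<bar>a\<bar>) at_top"
  unfolding tendsto_iff
proof (intro allI impI)
  fix e :: real assume e: "e > 0"
  define k0 where "k0 = \<bar>a\<bar> + e"
  have k0a: "\<bar>a\<bar> < k0" using e unfolding k0_def by simp
  define N where "N = max (hf a k0) 0 + 1"
  show "eventually (\<lambda>T. dist (ku a T) \<bar>a\<bar> < e) at_top"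
    unfolding eventually_at_top_linorder
  proof (intro exI[of _ N] allI impI)
    fix T assume T: "N \<le> T"
    have T0: "T > 0" using T unfolding N_def by simp
    have Td: "T \<in> delay_dom a" using T0 a mult_neg_pos[OF a T0] by (simp add: delay_dom_def)
    have "hf a k0 < T" using T unfolding N_def by simp
    hence "ku a T < k0" by (rule ku_gt[OF Td _ k0a])
    moreover have "\<bar>a\<bar> < ku a T" using ku_prop[OF Td] by simp
    ultimately show "dist (ku a T) \<bar>a\<bar> < e" unfolding k0_def dist_real_def by simp
  qed
qed

theorem proposition2:
  fixes a :: real
  shows "(\<forall>T\<in>delay_dom a. \<exists>!k. \<bar>a\<bar> < k \<and> T * sqrt (k^2 - a^2) = arccos (a / k))
    \<and> (\<forall>T1\<in>delay_dom a. \<forall>T2\<in>delay_dom a. T1 < T2 \<longrightarrow> ku a T2 < ku a T1)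
    \<and> convex_on (delay_dom a) (ku a)
    \<and> (a > 0 \<longrightarrow> ((ku a \<longlongrightarrow> a) (at_left (1 / a))
                     \<and> filterlim (ku a) at_top (at_right 0)))
    \<and> (a < 0 \<longrightarrow> ((ku a \<longlongrightarrow> \<bar>a\<bar>) at_top
                     \<and> filterlim (ku a) at_top (at_right 0)))"
  using ex1_k ku_dec ku_convex ku_at_left ku_at_right0 ku_at_top by blast

end
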